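(* Assume the focusing case $0<\mu_1\le\dots\le\mu_n$ (with $n\ge3$). Then there are infinitely many possible bifurcation parameters: for all but finitely many $k\in\mathbb N$, the equation $f(\beta)=\lambda_k$ has a unique solution $\beta\in(-\infty,\bar\beta)$.
   Context: Let $\Omega\subset\mathbb R^N$ ($N\le3$) be a smooth bounded domain whose principal Dirichlet eigenvalue of $-\Delta$ is less than $1$, and $\omega\in H_0^1(\Omega)$ the unique positive solution of $-\Delta\omega-\omega=-\omega^3$. Let $-1=\lambda_1<\lambda_2<\cdots\to\infty$ be the distinct eigenvalues of $-\Delta\psi-\psi=\lambda\omega^2\psi$, $\psi\in H_0^1(\Omega)$. Let $g(\beta)=1+\beta\sum_{j=1}^n\frac1{\mu_j-\beta}$, $f(\beta)=-1-\frac2{g(\beta)}$, and $\bar\beta$ the unique zero of $g$ in $(-\infty,0)$. A possible bifurcation parameter is a $\beta\in(-\infty,\bar\beta)$ with $f(\beta)=\lambda_k$ for some $k$ (equivalently, for which the linearization of the system $-\Delta u_j-u_j=\mu_ju_j^3+\beta\sum_{k\ne j}u_k^2u_j$ at the synchronized solution has nontrivial kernel). *)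

theory Defs
  imports Complex_Main
begin

text \<open>Coupling coefficients mu_1,...,mu_n are given as a function mu :: nat => real,
 only the values at indices 1..n matter.\<close>

definition g_fun :: "(nat \<Rightarrow> real) \<Rightarrow> nat \<Rightarrow> real \<Rightarrow> real" where
  "g_fun \<mu> n \<beta> = 1 + \<beta> * (\<Sum>j=1..n. 1 / (\<mu> j - \<beta>))"

definition f_fun :: "(nat \<Rightarrow> real) \<Rightarrow> nat \<Rightarrow> real \<Rightarrow> real" where
  "f_fun \<mu> n \<beta> = -1 - 2 / g_fun \<mu> n \<beta>"

definition beta_bar :: "(nat \<Rightarrow> real) \<Rightarrow> nat \<Rightarrow> real" where
  "beta_bar \<mu> n = (THE \<beta>. \<beta> < 0 \<and> g_fun \<mu> n \<beta> = 0)"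

end

theory Submission
  imports Defs
begin

lemma term_mono:
  fixes m b1 b2 :: real
  assumes "0 < m" "b1 < b2" "b2 \<le> 0"
  shows "b1 * (1 / (m - b1)) < b2 * (1 / (m - b2))"
proof -
  have p1: "m - b1 > 0" "m - b2 > 0" using assms by auto
  have "b1 * (m - b2) < b2 * (m - b1)" using assms by (simp add: algebra_simps)
  thus ?thesis using p1 by (simp add: field_simps)
qed

lemma g_mono:
  assumes pos: "\<forall>j\<in>{1..n}. 0 < \<mu> j" and n: "n \<ge> 1" and "b1 < b2" "b2 \<le> 0"
  shows "g_fun \<mu> n b1 < g_fun \<mu> n b2"
proof -
  have "(\<Sum>j=1..n. b1 * (1 / (\<mu> j - b1))) < (\<Sum>j=1..n. b2 * (1 / (\<mu> j - b2)))"
    apply (rule sum_strict_mono) using n pos assms(3,4) term_mono by auto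
  thus ?thesis unfolding g_fun_def by (simp add: sum_distrib_left)
qed

lemma g_cont:
  assumes pos: "\<forall>j\<in>{1..n}. 0 < \<mu> j" and "b \<le> 0"
  shows "continuous_on {a..b} (g_fun \<mu> n)"
proof -
  have "continuous_on {a..b} (\<lambda>x. 1 + x * (\<Sum>j=1..n. 1 / (\<mu> j - x)))"
    proof (intro continuous_intros ballI)
    fix x j assume "x \<in> {a..b}" "j \<in> {1..n}"
    hence "x \<le> 0" "0 < \<mu> j" using pos assms(2) by auto
    thus "\<mu> j - x \<noteq> 0" by simp
  qed
  thus ?thesis unfolding g_fun_def by (simp add: fun_eq_iff)
qed

lemma g_low:
  assumes pos: "\<forall>j\<in>{1..n}. 0 < \<mu> j" and le: "\<forall>j\<in>{1..n}. \<mu> j \<le> M" and n: "n \<ge> 1"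
    and b: "b \<le> - (real n * M)"
  shows "g_fun \<mu> n b < 2 - real n"
proof -
  have M: "M > 0" using pos le n by (meson atLeastAtMost_iff le_refl less_le_trans)
  have "\<forall>j\<in>{1..n}. b * (1 / (\<mu> j - b)) < 1 / real n - 1"
  proof
    fix j assume j: "j \<in> {1..n}"
    have mj: "0 < \<mu> j" "\<mu> j \<le> M" using pos le j by auto
    have "real n * M > 0" using M n by simp
    hence bneg: "b < 0" using b by linarith
    have d: "\<mu> j - b > 0" using mj bneg by auto
    have "b * (1 / (\<mu> j - b)) = \<mu> j / (\<mu> j - b) - 1" using d by (simp add: field_simps)
    also have "\<mu> j / (\<mu> j - b) < 1 / real n"
    proof -
      have "\<mu> j * real n \<le> M * real n" using mj by (intro mult_right_mono) auto
      also have "\<dots> \<le> - b" using b by (simp add: algebra_simps)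
      also have "\<dots> < \<mu> j - b" using mj by simp
      finally show ?thesis using d n by (simp add: field_simps)
    qed
    finally show "b * (1 / (\<mu> j - b)) < 1 / real n - 1" by simp
  qed
  hence "(\<Sum>j=1..n. b * (1 / (\<mu> j - b))) < (\<Sum>j=1..n. 1 / real n - 1)"
    using n by (intro sum_strict_mono) auto
  also have "\<dots> = 1 - real n" using n by (simp add: field_simps)
  finally show ?thesis unfolding g_fun_def by (simp add: sum_distrib_left)
qed

theorem lemma3p3:
  fixes \<mu> :: "nat \<Rightarrow> real" and n :: nat and lam :: "nat \<Rightarrow> real"
  assumes n3: "n \<ge> 3"
    and mu_pos: "0 < \<mu> 1"
    and mu_sorted: "\<And>i j. 1 \<le> i \<Longrightarrow> i \<le> j \<Longrightarrow> j \<le> n \<Longrightarrow> \<mu> i \<le> \<mu> j"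
    and lam1: "lam 1 = -1"
    and lam_incr: "\<And>k. 1 \<le> k \<Longrightarrow> lam k < lam (Suc k)"
    and lam_inf: "filterlim lam at_top sequentially"
  shows "finite {k. \<not> (\<exists>!\<beta>. \<beta> < beta_bar \<mu> n \<and> f_fun \<mu> n \<beta> = lam k)}"
proof -
  have n1: "n \<ge> 1" using n3 by simp
  have pos: "\<forall>j\<in>{1..n}. 0 < \<mu> j" proof
    fix j assume "j \<in> {1..n}"
    hence "\<mu> 1 \<le> \<mu> j" using mu_sorted[of 1 j] by auto
    thus "0 < \<mu> j" using mu_pos by linarith
  qed
  have le: "\<forall>j\<in>{1..n}. \<mu> j \<le> \<mu> n" using mu_sorted by auto
  define b0 where "b0 = - (real n * \<mu> n)"
  have gb0: "g_fun \<mu> n b0 < 2 - real n" using g_low[OF pos le n1] b0_def by simp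
  have g0: "g_fun \<mu> n 0 = 1" by (simp add: g_fun_def)
  have "0 < \<mu> n" using pos n1 by auto
  hence b0neg: "b0 \<le> 0" unfolding b0_def by simp
  obtain x where x: "b0 \<le> x" "x \<le> 0" "g_fun \<mu> n x = 0"
    using IVT'[of "g_fun \<mu> n" b0 0 0, OF _ _ b0neg g_cont[OF pos order.refl, of b0]] gb0 g0 n3 by auto
  have xneg: "x < 0" proof -
    have "x \<noteq> 0" using x g0 by auto
    thus ?thesis using x by simp
  qed
  have inj: "\<And>a b. a \<le> 0 \<Longrightarrow> b \<le> 0 \<Longrightarrow> g_fun \<mu> n a = g_fun \<mu> n b \<Longrightarrow> a = b"
    proof (rule ccontr)
    fix a b :: real assume "a \<le> 0" "b \<le> 0" "g_fun \<mu> n a = g_fun \<mu> n b" "a \<noteq> b"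
    hence "a < b \<or> b < a" by auto
    thus False using g_mono[OF pos n1, of a b] g_mono[OF pos n1, of b a] \<open>a \<le> 0\<close> \<open>b \<le> 0\<close> \<open>g_fun \<mu> n a = g_fun \<mu> n b\<close> by auto
  qed
  have bb: "beta_bar \<mu> n < 0 \<and> g_fun \<mu> n (beta_bar \<mu> n) = 0"
    unfolding beta_bar_def
  proof (rule theI[of _ x])
    show "x < 0 \<and> g_fun \<mu> n x = 0" using xneg x by auto
    show "\<And>y. y < 0 \<and> g_fun \<mu> n y = 0 \<Longrightarrow> y = x" using inj xneg x by auto
  qed
  define bb where "bb = beta_bar \<mu> n"
  have good: "\<exists>!\<beta>. \<beta> < bb \<and> f_fun \<mu> n \<beta> = c" if c: "c > 1" for c
  proof -
    define t where "t = - 2 / (c + 1)"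
    have t: "-1 < t" "t < 0" using c unfolding t_def by (auto simp: field_simps)
    define b1 where "b1 = min b0 (bb - 1)"
    have gb1: "g_fun \<mu> n b1 < 2 - real n"
      using g_low[OF pos le n1, of b1] b1_def b0_def by simp
    have "2 - real n \<le> -1" using n3 by simp
    hence gb1t: "g_fun \<mu> n b1 \<le> t" using gb1 t by linarith
    have b1bb: "b1 \<le> bb" unfolding b1_def by simp
    obtain y where y: "b1 \<le> y" "y \<le> bb" "g_fun \<mu> n y = t"
      using IVT'[of "g_fun \<mu> n" b1 t bb, OF gb1t _ b1bb g_cont[OF pos, of bb b1]] bb t
      unfolding bb_def by auto
    have ylt: "y < bb" proof -
      have "y \<noteq> bb" using y t bb bb_def by auto
      thus ?thesis using y by simp
    qed
    have fy: "f_fun \<mu> n y = c" unfolding f_fun_def y(3) t_def using c by (simp add: field_simps)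
    show ?thesis
    proof (rule ex1I[of _ y])
      show "y < bb \<and> f_fun \<mu> n y = c" using ylt fy by simp
      fix z assume z: "z < bb \<and> f_fun \<mu> n z = c"
      have gz: "g_fun \<mu> n z \<noteq> 0"
      proof
        assume "g_fun \<mu> n z = 0" thus False using z c unfolding f_fun_def by simp
      qed
      have "g_fun \<mu> n z = t" using z gz c unfolding f_fun_def t_def by (simp add: field_simps)
      thus "z = y" using inj[of z y] z ylt bb bb_def y(3) by simp
    qed
  qed
  have "\<forall>\<^sub>F k in sequentially. lam k > 1" using lam_inf by (simp add: filterlim_at_top_dense)
  then obtain N where N: "\<And>k. k \<ge> N \<Longrightarrow> lam k > 1" unfolding eventually_sequentially by auto
  have "{k. \<not> (\<exists>!\<beta>. \<beta> < beta_bar \<mu> n \<and> f_fun \<mu> n \<beta> = lam k)} \<subseteq> {..<N}"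
    proof
    fix k assume "k \<in> {k. \<not> (\<exists>!\<beta>. \<beta> < beta_bar \<mu> n \<and> f_fun \<mu> n \<beta> = lam k)}"
    hence "\<not> lam k > 1" using good unfolding bb_def by blast
    thus "k \<in> {..<N}" using N by (meson lessThan_iff not_le)
  qed
  thus ?thesis using finite_subset by blast
qed

end
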